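(* Let $C_0\subset\mathbb{R}^n$ be a nonempty polyhedral set, $F:\mathbb{R}^n\to\mathbb{R}^m$ continuously differentiable, $\bar u\in C_0$, and assume $\nabla F$ is semidifferentiable at $\bar u$ for a unit direction $w\in T_{C_0}(\bar u)$. If for $z\in\mathbb{R}^m$ \[ \big[\,\nabla F(\bar u)z\in N_{C_0}(\bar u)\ \text{ and }\ (\nabla F)'(\bar u;w)z\in\mathrm{rge}\,\nabla F(\bar u)+N_{C_0}(\bar u)\,\big]\Longrightarrow z=0, \] then $F+\varDelta_{C_0}$ is metrically 2-regular around $(\bar u,F(\bar u))$ relative to $w$.
   Context: $\varDelta_{C_0}(x):=\{0\}$ if $x\in C_0$ and $\emptyset$ otherwise. $\nabla F(u)$ is the $n\times m$ transpose of the Jacobian; $\mathrm{rge}\,\nabla F(\bar u)$ its range; $(\nabla F)'(\bar u;w):=\lim_{\tau\searrow0,w'\to w}(\nabla F(\bar u+\tau w')-\nabla F(\bar u))/\tau$ (semidifferentiable if it exists). $T_Z(x):=\limsup_{\tau\searrow0}(Z-x)/\tau$ is the tangent cone; $N_{C_0}$ is the normal cone (for convex $C_0$, the normal cone of convex analysis). $\mathbb{B}$ closed unit ball, $\mathrm{cone}(Z):=\bigcup_{\gamma\ge0}\gamma Z$. Graphical derivative $DS(\bar u|\bar y)(w):=\{v\mid(w,v)\in T_{\mathrm{gph}\,S}(\bar u,\bar y)\}$. $S$ is metrically regular around $(u,y)\in\mathrm{gph}\,S$ with constant $c>0$ if there is $\varepsilon>0$ with $\mathrm{dist}[u',S^{-1}(y')]\le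 c\,\mathrm{dist}[y',S(u')]$ for all $(u',y')\in(u,y)+\varepsilon\mathbb{B}$. $K_{\varepsilon,\delta}(\bar u;w):=\bar u+(\varepsilon\mathbb{B}\cap\mathrm{cone}(w+\delta\mathbb{B}))$. $S$ is metrically 2-regular around $(\bar u,\bar y)$ relative to $w\ne0$ if for some $c>0$ there are $\varepsilon_0,\delta_0,\rho_0>0$ with $\rho_0>\|w\|^{-1}\sup\{\|\eta\|\mid\eta\in DS(\bar u|\bar y)(w)\}$ such that $S$ is metrically regular around $(u,y)$ with constant $c/\|u-\bar u\|$ for all $u\in K_{\varepsilon_0,\delta_0}(\bar u;w)\setminus\{\bar u\}$ and $y\in S(u)\cap(\bar y+\rho_0\|u-\bar u\|\mathbb{B})$. *)

theory Defs
  imports "HOL-Analysis.Analysis"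
begin

definition delta_map :: "'a set \<Rightarrow> 'a \<Rightarrow> 'b::zero set" where
  "delta_map C x = (if x \<in> C then {0} else {})"

definition plus_delta :: "('a \<Rightarrow> 'b::monoid_add) \<Rightarrow> 'a set \<Rightarrow> 'a \<Rightarrow> 'b set" where
  "plus_delta F C u = {F u + d | d. d \<in> delta_map C u}"

definition gph :: "('a \<Rightarrow> 'b set) \<Rightarrow> ('a \<times> 'b) set" where
  "gph S = {(u, y). y \<in> S u}"

definition inv_map :: "('a \<Rightarrow> 'b set) \<Rightarrow> 'b \<Rightarrow> 'a set" where
  "inv_map S y = {u. y \<in> S u}"

text \<open>Tangent cone T_Z(x) = limsup_{tau -> 0+} (Z - x)/tau (outer limit, sequential form).\<close>
definition tangent_cone :: "'a::real_normed_vector set \<Rightarrow> 'a \<Rightarrow> 'a set" where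
  "tangent_cone Z x = {v. \<exists>t vs. (\<forall>k. t k > 0) \<and> t \<longlonglongrightarrow> 0 \<and> vs \<longlonglongrightarrow> v
                                  \<and> (\<forall>k. x + t k *\<^sub>R vs k \<in> Z)}"

definition normal_cone :: "'a::real_inner set \<Rightarrow> 'a \<Rightarrow> 'a set" where
  "normal_cone C x = (if x \<in> C then {v. \<forall>y\<in>C. inner v (y - x) \<le> 0} else {})"

definition graph_deriv ::
  "('a::real_normed_vector \<Rightarrow> 'b::real_normed_vector set) \<Rightarrow> 'a \<Rightarrow> 'b \<Rightarrow> 'a \<Rightarrow> 'b set" where
  "graph_deriv S u y w = {v. (w, v) \<in> tangent_cone (gph S) (u, y)}"

definition edist_set :: "'a::metric_space \<Rightarrow> 'a set \<Rightarrow> ereal" where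
  "edist_set x A = (if A = {} then \<infinity> else ereal (infdist x A))"

definition metrically_regular_around ::
  "('a::metric_space \<Rightarrow> 'b::metric_space set) \<Rightarrow> 'a \<Rightarrow> 'b \<Rightarrow> real \<Rightarrow> bool" where
  "metrically_regular_around S u y c \<longleftrightarrow>
     (\<exists>\<epsilon>>0. \<forall>u' y'. dist (u', y') (u, y) \<le> \<epsilon> \<longrightarrow>
         edist_set u' (inv_map S y') \<le> ereal c * edist_set y' (S u'))"

definition Kset :: "real \<Rightarrow> real \<Rightarrow> 'a::real_normed_vector \<Rightarrow> 'a \<Rightarrow> 'a set" where
  "Kset \<epsilon> \<delta> u w = {u + v | v. norm v \<le> \<epsilon> \<and>
                        (\<exists>\<gamma>\<ge>0. \<exists>z. norm (z - w) \<le> \<delta> \<and> v = \<gamma> *\<^sub>R z)}"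

definition metrically_2_regular ::
  "('a::real_normed_vector \<Rightarrow> 'b::real_normed_vector set) \<Rightarrow> 'a \<Rightarrow> 'b \<Rightarrow> 'a \<Rightarrow> bool" where
  "metrically_2_regular S ub yb w \<longleftrightarrow> w \<noteq> 0 \<and>
     (\<exists>c>0. \<exists>\<epsilon>0>0. \<exists>\<delta>0>0. \<exists>\<rho>0>0.
        ereal \<rho>0 > (SUP \<eta>\<in>graph_deriv S ub yb w. ereal (norm \<eta> / norm w)) \<and>
        (\<forall>u\<in>Kset \<epsilon>0 \<delta>0 ub w - {ub}. \<forall>y\<in>S u \<inter> cball yb (\<rho>0 * norm (u - ub)).
            metrically_regular_around S u y (c / norm (u - ub))))"

end

theory Submission
  imports Defs
begin


lemma poly_rep:
  fixes C :: "'a::euclidean_space set"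
  assumes "polyhedron C"
  obtains I :: "'a set set" and a b where "finite I" "C = {x. \<forall>i\<in>I. a i \<bullet> x \<le> b i}"
proof -
  obtain F where F: "finite F" "C = \<Inter>F" "\<forall>h\<in>F. \<exists>a b. a \<noteq> 0 \<and> h = {x. a \<bullet> x \<le> b}"
    using assms unfolding polyhedron_def by blast
  then obtain a b where ab: "\<forall>h\<in>F. h = {x. a h \<bullet> x \<le> b h}"
    by metis
  have "C = {x. \<forall>i\<in>F. a i \<bullet> x \<le> b i}"
    using F(2) ab by auto
  then show ?thesis using that F(1) by blast
qed

definition act :: "'a set set \<Rightarrow> ('a set \<Rightarrow> 'a::real_inner) \<Rightarrow> ('a set \<Rightarrow> real) \<Rightarrow> 'a \<Rightarrow> 'a set set" where
  "act I a b u = {i\<in>I. a i \<bullet> u = b i}"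

lemma poly_local:
  fixes C :: "'a::euclidean_space set"
  assumes fin: "finite I" and C: "C = {x. \<forall>i\<in>I. a i \<bullet> x \<le> b i}" and u: "u \<in> C"
  shows "\<exists>\<rho>>0. \<forall>x\<in>C. dist x u < \<rho> \<longrightarrow> act I a b x \<subseteq> act I a b u \<and>
            (\<forall>v. (\<forall>i\<in>act I a b u. a i \<bullet> v \<le> 0) \<longrightarrow> norm v < \<rho> \<longrightarrow> x + v \<in> C)"
proof -
  define Op where "Op = (\<Inter>i\<in>I - act I a b u. {y. a i \<bullet> y < b i})"
  have "open Op" unfolding Op_def using fin by (intro open_INT) (auto intro: open_halfspace_lt)
  moreover have "u \<in> Op" using u C unfolding Op_def act_def by force
  ultimately obtain e where e: "e > 0" "ball u e \<subseteq> Op" by (meson open_contains_ball)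
  show ?thesis
  proof (intro exI[of _ "e/2"] conjI allI ballI impI)
    show "e/2 > 0" using e by simp
    fix x assume x: "x \<in> C" "dist x u < e/2"
    then have xOp: "x \<in> Op" using e by (auto simp: dist_commute)
    show "act I a b x \<subseteq> act I a b u"
    proof
      fix i assume i: "i \<in> act I a b x"
      show "i \<in> act I a b u"
      proof (rule ccontr)
        assume "i \<notin> act I a b u"
        then have "a i \<bullet> x < b i" using xOp i unfolding Op_def act_def by force
        then show False using i unfolding act_def by auto
      qed
    qed
    fix v assume v: "\<forall>i\<in>act I a b u. a i \<bullet> v \<le> 0" "norm v < e/2"
    have "dist (x + v) u < e"
      using x(2) v(2) by (smt (verit, best) dist_commute dist_norm dist_triangle_half_l norm_minus_commute add_diff_cancel_left' diff_add_eq dist_add_cancel dist_triangle2)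
    then have xvO: "x + v \<in> Op" using e by (auto simp: dist_commute)
    show "x + v \<in> C"
      unfolding C
    proof (intro CollectI ballI)
      fix i assume i: "i \<in> I"
      show "a i \<bullet> (x + v) \<le> b i"
      proof (cases "i \<in> act I a b u")
        case True
        show ?thesis proof - have "a i \<bullet> v \<le> 0" "a i \<bullet> x \<le> b i" using True v(1) x(1) i C by auto then show ?thesis by (simp add: inner_add_right) qed
      next
        case False
        then have "x + v \<in> {y. a i \<bullet> y < b i}" using xvO i unfolding Op_def by blast
        then show ?thesis by simp
      qed
    qed
  qed
qed

lemma act_normal:
  fixes C :: "'a::euclidean_space set"
  assumes C: "C = {x. \<forall>i\<in>I. a i \<bullet> x \<le> b i}" and u: "u \<in> C"
  shows "convex_cone hull (a ` act I a b u) \<subseteq> normal_cone C u"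
proof (rule hull_minimal)
  show "a ` act I a b u \<subseteq> normal_cone C u"
    using u C by (auto simp: act_def normal_cone_def inner_diff_right)
  show "convex_cone (normal_cone C u)"
    using u unfolding convex_cone_iff normal_cone_def
    by (auto simp: inner_add_left mult_nonneg_nonpos add_nonpos_nonpos)
qed



lemma cone_dist_sep:
  fixes S :: "'a::euclidean_space set"
  assumes fin: "finite S" and s: "s \<ge> 0"
    and bnd: "\<And>v. (\<forall>a\<in>S. a \<bullet> v \<le> 0) \<Longrightarrow> norm v \<le> 1 \<Longrightarrow> p \<bullet> v \<le> s"
  shows "\<exists>g\<in>convex_cone hull S. norm (p - g) \<le> s"
proof (rule ccontr)
  assume nc: "\<not> ?thesis"
  define G where "G = convex_cone hull S"
  define W where "W = (\<Union>g\<in>G. \<Union>e\<in>cball (0::'a) s. {g + e})"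
  have "closed G" unfolding G_def using fin by (rule closed_convex_cone_hull)
  then have "closed W" unfolding W_def by (intro closed_compact_sums) auto
  have "convex W" unfolding W_def G_def by (intro convex_sums) (auto simp: convex_convex_cone_hull)
  have "p \<notin> W"
  proof
    assume "p \<in> W"
    then obtain g e where "g \<in> G" "norm e \<le> s" "p = g + e" unfolding W_def by auto
    then show False using nc unfolding G_def by (metis add_diff_cancel_left')
  qed
  then obtain z \<beta> where z: "z \<bullet> p < \<beta>" "\<forall>x\<in>W. \<beta> < z \<bullet> x"
    using separating_hyperplane_closed_point[OF \<open>convex W\<close> \<open>closed W\<close>] by blast
  define v0 where "v0 = - z"
  have W0: "\<And>g e. g \<in> G \<Longrightarrow> norm e \<le> s \<Longrightarrow> v0 \<bullet> (g + e) < - \<beta>"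
    using z(2) unfolding W_def v0_def by fastforce
  have "0 \<in> G" unfolding G_def by (rule convex_cone_hull_contains_0)
  have b0: "0 < - \<beta>" using W0[OF \<open>0 \<in> G\<close>, of 0] s by simp
  have vp: "v0 \<bullet> p > - \<beta>" using z(1) unfolding v0_def by simp
  have vT: "\<forall>a\<in>S. a \<bullet> v0 \<le> 0"
  proof (rule ballI, rule ccontr)
    fix a assume a: "a \<in> S" "\<not> a \<bullet> v0 \<le> 0"
    define t where "t = - \<beta> / (v0 \<bullet> a)"
    have pos: "v0 \<bullet> a > 0" using a by (simp add: inner_commute)
    have "t \<ge> 0" unfolding t_def using b0 pos by (simp add: divide_nonpos_pos)
    then have "t *\<^sub>R a \<in> G" unfolding G_def using a(1) by (simp add: convex_cone_hull_mul hull_inc)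
    then have "v0 \<bullet> (t *\<^sub>R a + 0) < - \<beta>" using W0[of "t *\<^sub>R a" 0] s by simp
    moreover have "v0 \<bullet> (t *\<^sub>R a + 0) = - \<beta>" unfolding t_def using pos by simp
    ultimately show False by simp
  qed
  have "v0 \<noteq> 0" using vp b0 by auto
  then have nv: "norm v0 > 0" by simp
  define v1 where "v1 = (1 / norm v0) *\<^sub>R v0"
  have "norm v1 = 1" unfolding v1_def using nv by simp
  moreover have "\<forall>a\<in>S. a \<bullet> v1 \<le> 0" unfolding v1_def using vT nv
    by (simp add: divide_nonpos_pos)
  ultimately have pv1: "p \<bullet> v1 \<le> s" using bnd by simp
  have "norm (s *\<^sub>R v1) \<le> s" using \<open>norm v1 = 1\<close> s by simp
  then have "v0 \<bullet> (0 + s *\<^sub>R v1) < - \<beta>" using W0[OF \<open>0 \<in> G\<close>] by blast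
  then have "s * norm v0 < - \<beta>" unfolding v1_def using nv
    by (simp add: power2_norm_eq_inner[symmetric] power2_eq_square)
  with vp have "s * norm v0 < v0 \<bullet> p" by simp
  then have "s < p \<bullet> v1" unfolding v1_def using nv
    by (simp add: inner_commute field_simps)
  with pv1 show False by simp
qed



lemma lin_open:
  fixes M :: "real^'n^'m" and S :: "(real^'n) set"
  assumes fin: "finite S" and k: "\<kappa> > 0"
   and H: "\<And>y g. norm y = 1 \<Longrightarrow> g \<in> convex_cone hull S \<Longrightarrow> \<kappa> \<le> norm (transpose M *v y - g)"
   and r: "norm r < \<kappa>"
  shows "\<exists>v. (\<forall>s\<in>S. s \<bullet> v \<le> 0) \<and> norm v \<le> 1 \<and> M *v v = r"
proof (rule ccontr)
  assume nc: "\<not> ?thesis"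
  define T where "T = (\<Inter>s\<in>S. {v. s \<bullet> v \<le> 0})"
  have "closed T" unfolding T_def by (intro closed_INT) (auto intro: closed_halfspace_le)
  have "convex T" unfolding T_def by (intro convex_INT) (auto intro: convex_halfspace_le)
  define K where "K = T \<inter> cball 0 1"
  have "compact K" unfolding K_def using \<open>closed T\<close> by (intro closed_Int_compact) auto
  have "convex K" unfolding K_def using \<open>convex T\<close> by (intro convex_Int) auto
  define Q where "Q = (\<lambda>v. M *v v) ` K"
  have "compact Q" unfolding Q_def using \<open>compact K\<close>
    by (intro compact_continuous_image) (auto intro: continuous_intros)
  have "convex Q" unfolding Q_def using \<open>convex K\<close>
    by (intro convex_linear_image) (auto simp: matrix_vector_mul_linear)
  have "r \<notin> Q" using nc unfolding Q_def K_def T_def by auto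
  then obtain z \<beta> where z: "z \<bullet> r < \<beta>" "\<forall>x\<in>Q. \<beta> < z \<bullet> x"
    using separating_hyperplane_closed_point[OF \<open>convex Q\<close> compact_imp_closed[OF \<open>compact Q\<close>]] by blast
  have "M *v 0 \<in> Q" unfolding Q_def K_def T_def by (intro imageI) auto
  then have "\<beta> < z \<bullet> (M *v 0)" using z(2) by blast
  then have b0: "\<beta> < 0" by simp
  define y0 where "y0 = - z"
  have y0r: "y0 \<bullet> r > - \<beta>" using z(1) unfolding y0_def by simp
  have y0Q: "y0 \<bullet> (M *v v) < - \<beta>" if "v \<in> K" for v
  proof -
    have "M *v v \<in> Q" unfolding Q_def using that by (rule imageI)
    then have "\<beta> < z \<bullet> (M *v v)" using z(2) by blast
    then show ?thesis unfolding y0_def by simp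
  qed
  have "y0 \<noteq> 0" using y0r b0 by auto
  then have ny: "norm y0 > 0" by simp
  define y where "y = (1 / norm y0) *\<^sub>R y0"
  have ny1: "norm y = 1" unfolding y_def using ny by simp
  define p where "p = transpose M *v y"
  have pv: "p \<bullet> v = y \<bullet> (M *v v)" for v
    unfolding p_def by (simp add: dot_lmul_matrix)
  have bnd: "p \<bullet> v \<le> norm r" if "\<forall>a\<in>S. a \<bullet> v \<le> 0" "norm v \<le> 1" for v
  proof -
    have "v \<in> K" using that unfolding K_def T_def by auto
    then have "y0 \<bullet> (M *v v) < y0 \<bullet> r" using y0Q y0r by (meson less_trans)
    then have "y \<bullet> (M *v v) < y \<bullet> r" unfolding y_def using ny by (simp add: divide_strict_right_mono)
    also have "\<dots> \<le> norm y * norm r" by (rule norm_cauchy_schwarz)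
    finally show ?thesis using ny1 pv by simp
  qed
  obtain g where g: "g \<in> convex_cone hull S" "norm (p - g) \<le> norm r"
    using cone_dist_sep[OF fin norm_ge_zero bnd] by blast
  have "\<kappa> \<le> norm (p - g)" using H[OF ny1 g(1)] unfolding p_def .
  with g(2) r show False by simp
qed



lemma onorm_mat_le:
  fixes A :: "real^'n^'m"
  shows "onorm ((*v) A) \<le> real (CARD('m)) * real (CARD('n)) * norm A"
proof (rule onorm_le_matrix_component)
  fix i j
  have "norm (A $ i $ j) \<le> norm (A $ i)" by (rule Finite_Cartesian_Product.norm_nth_le)
  also have "\<dots> \<le> norm A" by (rule Finite_Cartesian_Product.norm_nth_le)
  finally
  show "\<bar>A $ i $ j\<bar> \<le> norm A" by simp
qed

lemma plus_delta_eq: "plus_delta F C x = (if x \<in> C then {F x} else {})"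
  unfolding plus_delta_def delta_map_def by auto

lemma inv_map_pd: "inv_map (plus_delta F C) y = {x\<in>C. F x = y}"
  unfolding inv_map_def plus_delta_eq by auto

lemma mr_from_open:
  fixes C :: "(real^'n) set" and F :: "real^'n \<Rightarrow> real^'m" and J :: "real^'n \<Rightarrow> real^'n^'m"
  assumes clC: "closed C"
    and deriv: "\<And>u. (F has_derivative (\<lambda>h. J u *v h)) (at u)"
    and contJ: "continuous_on UNIV J"
    and uC: "u \<in> C" and k: "\<kappa> > 0" and rho: "\<rho> > 0"
    and T0: "0 \<in> T" and Tc: "\<And>c v. c \<ge> 0 \<Longrightarrow> v \<in> T \<Longrightarrow> c *\<^sub>R v \<in> T"
    and loc: "\<And>x v. x \<in> C \<Longrightarrow> dist x u < \<rho> \<Longrightarrow> v \<in> T \<Longrightarrow> norm v < \<rho> \<Longrightarrow> x + v \<in> C"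
    and op: "\<And>r. norm r < \<kappa> \<Longrightarrow> \<exists>v\<in>T. norm v \<le> 1 \<and> J u *v v = r"
  shows "metrically_regular_around (plus_delta F C) u (F u) (4 / \<kappa>)"
proof -
  define A where "A = J u"
  define L where "L = 2 / \<kappa>"
  have L: "L > 0" unfolding L_def using k by simp
  define R where "R r = (if r = 0 then 0 else (2 * norm r / \<kappa>) *\<^sub>R
      (SOME v. v \<in> T \<and> norm v \<le> 1 \<and> A *v v = (\<kappa> / 2 / norm r) *\<^sub>R r))" for r
  have Rp: "R r \<in> T \<and> norm (R r) \<le> L * norm r \<and> A *v R r = r" for r
  proof (cases "r = 0")
    case True then show ?thesis unfolding R_def using T0 by simp
  next
    case False
    then have nr: "norm r > 0" by simp
    have "norm ((\<kappa> / 2 / norm r) *\<^sub>R r) < \<kappa>" using nr k by simp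
    then have "\<exists>v. v \<in> T \<and> norm v \<le> 1 \<and> A *v v = (\<kappa> / 2 / norm r) *\<^sub>R r"
      using op unfolding A_def by blast
    then have sv: "(SOME v. v \<in> T \<and> norm v \<le> 1 \<and> A *v v = (\<kappa> / 2 / norm r) *\<^sub>R r) \<in> T \<and>
       norm (SOME v. v \<in> T \<and> norm v \<le> 1 \<and> A *v v = (\<kappa> / 2 / norm r) *\<^sub>R r) \<le> 1 \<and>
       A *v (SOME v. v \<in> T \<and> norm v \<le> 1 \<and> A *v v = (\<kappa> / 2 / norm r) *\<^sub>R r) = (\<kappa> / 2 / norm r) *\<^sub>R r"
      by (rule someI_ex)
    show ?thesis
    proof (intro conjI)
      show "R r \<in> T" unfolding R_def using False sv Tc k by simp
      show "norm (R r) \<le> L * norm r" unfolding R_def L_def using False sv k nr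
        by (auto simp: field_simps intro: mult_left_le)
      show "A *v R r = r" unfolding R_def using False sv k nr
        by (simp add: matrix_vector_mult_scaleR)
    qed
  qed
  define Kc where "Kc = real (CARD('m)) * real (CARD('n))"
  have Kc: "Kc > 0" unfolding Kc_def by simp
  have "isCont J u" using contJ by (simp add: continuous_on_eq_continuous_at)
  then obtain d1 where d1: "d1 > 0" "\<And>x. dist x u < d1 \<Longrightarrow> dist (J x) (J u) < \<kappa> / 4 / Kc"
    unfolding continuous_at_eps_delta using k Kc by (metis divide_pos_pos zero_less_numeral)
  define R0 where "R0 = min d1 \<rho>"
  have R0: "R0 > 0" unfolding R0_def using d1 rho by simp
  have lin: "norm (F b - F a - A *v (b - a)) \<le> norm (b - a) * (\<kappa> / 4)"
    if "a \<in> ball u R0" "b \<in> ball u R0" for a b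
  proof -
    have "norm (F b - F a - (\<lambda>h. J u *v h) (b - a)) \<le> norm (b - a) * (\<kappa> / 4)"
    proof (rule differentiable_bound_linearization[where S="ball u R0" and f'="\<lambda>x h. J x *v h"])
      show "a + t *\<^sub>R (b - a) \<in> ball u R0" if "t \<in> {0..1}" for t
      proof -
        have "(1 - t) *\<^sub>R a + t *\<^sub>R b \<in> ball u R0"
          using that \<open>a \<in> ball u R0\<close> \<open>b \<in> ball u R0\<close> by (intro convexD[OF convex_ball]) auto
        moreover have "a + t *\<^sub>R (b - a) = (1 - t) *\<^sub>R a + t *\<^sub>R b" by (simp add: algebra_simps)
        ultimately show ?thesis by simp
      qed
      show "(F has_derivative (\<lambda>h. J x *v h)) (at x within ball u R0)" for x
        using deriv by (rule has_derivative_at_withinI)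
      show "u \<in> ball u R0" using R0 by simp
      show "onorm ((\<lambda>h. J x *v h) - (\<lambda>h. J u *v h)) \<le> \<kappa> / 4" if "x \<in> ball u R0" for x
      proof -
        have "(\<lambda>h. J x *v h) - (\<lambda>h. J u *v h) = (*v) (J x - J u)"
          by (auto simp: fun_diff_def matrix_vector_mult_diff_rdistrib)
        moreover have "onorm ((*v) (J x - J u)) \<le> Kc * norm (J x - J u)"
          using onorm_mat_le unfolding Kc_def by blast
        moreover have "dist x u < d1" using that R0_def by (simp add: dist_commute)
        then have "norm (J x - J u) < \<kappa> / 4 / Kc" using d1(2) by (simp add: dist_norm)
        then have "Kc * norm (J x - J u) \<le> \<kappa> / 4" using Kc by (simp add: field_simps)
        ultimately show ?thesis by simp
      qed
    qed
    then show ?thesis unfolding A_def by simp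
  qed

  have "continuous_on UNIV F"
    using deriv by (meson differentiable_at_imp_differentiable_on differentiable_def differentiable_imp_continuous_on)
  then have "isCont F u" by (simp add: continuous_on_eq_continuous_at)
  then obtain d2 where d2: "d2 > 0" "\<And>x. dist x u < d2 \<Longrightarrow> dist (F x) (F u) < R0 / (8 * L)"
    unfolding continuous_at_eps_delta using R0 L by (metis divide_pos_pos mult_pos_pos zero_less_numeral)
  define \<epsilon> where "\<epsilon> = min (R0 / 4) (min (d2 / 2) (R0 / (8 * L)))"
  have eps: "\<epsilon> > 0" unfolding \<epsilon>_def using R0 d2 L by simp
  show ?thesis
    unfolding metrically_regular_around_def
  proof (intro exI[of _ \<epsilon>] conjI allI impI)
    show "\<epsilon> > 0" by (rule eps)
    fix u' y' assume dd: "dist (u', y') (u, F u) \<le> \<epsilon>"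
    have du: "dist u' u \<le> \<epsilon>" using dd dist_fst_le[of "(u', y')" "(u, F u)"] by simp
    have dy: "dist y' (F u) \<le> \<epsilon>" using dd dist_snd_le[of "(u', y')" "(u, F u)"] by simp
    show "edist_set u' (inv_map (plus_delta F C) y') \<le> ereal (4 / \<kappa>) * edist_set y' (plus_delta F C u')"
    proof (cases "u' \<in> C")
      case False
      then have "edist_set y' (plus_delta F C u') = \<infinity>" unfolding edist_set_def plus_delta_eq by simp
      then show ?thesis using k by simp
    next
      case True
      define e0 where "e0 = norm (F u' - y')"
      have "dist u' u < d2" using du eps unfolding \<epsilon>_def by simp
      then have "dist (F u') (F u) < R0 / (8 * L)" using d2 by simp
      moreover have "dist y' (F u) \<le> R0 / (8 * L)" using dy unfolding \<epsilon>_def by simp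
      moreover have "e0 = dist (F u') y'" unfolding e0_def by (simp add: dist_norm)
      ultimately have "e0 \<le> R0 / (8 * L) + R0 / (8 * L)"
        using dist_triangle[of "F u'" y' "F u"] by (simp add: dist_commute)
      then have e0b: "2 * L * e0 \<le> R0 / 2" using L by (simp add: field_simps)
      have e0p: "e0 \<ge> 0" unfolding e0_def by simp
      have du4: "dist u' u \<le> R0 / 4" using du unfolding \<epsilon>_def by simp
      have geo: "2 * L * e0 * (1 - (1/2)^j) \<le> 2 * L * e0" for j :: nat
      proof -
        have "0 \<le> 2 * L * e0 * (1/2)^j" using L e0p by simp
        then show ?thesis by (simp add: right_diff_distrib)
      qed
      define step where "step z = z + R (y' - F z)" for z
      define x where "x k = (step ^^ k) u'" for k
      have x0: "x 0 = u'" unfolding x_def by simp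
      have xS: "x (Suc k) = x k + R (y' - F (x k))" for k unfolding x_def step_def by simp
      have inv: "x k \<in> C \<and> norm (x k - u') \<le> 2 * L * e0 * (1 - (1/2)^k) \<and> norm (F (x k) - y') \<le> (1/2)^k * e0" for k
      proof (induction k)
        case 0 then show ?case using True unfolding e0_def x0 by simp
      next
        case (Suc k)
        define r where "r = y' - F (x k)"
        define d where "d = R r"
        have nr: "norm r \<le> (1/2)^k * e0" using Suc unfolding r_def by (simp add: norm_minus_commute)
        have dT: "d \<in> T" and nd: "norm d \<le> L * norm r" and Ad: "A *v d = r" using Rp unfolding d_def by auto
        have nd2: "norm d \<le> L * ((1/2)^k * e0)" using nd nr L by (meson mult_left_mono less_imp_le order_trans)
        have pk: "(1/2::real)^k \<le> 1" by (simp add: power_le_one)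
        have "(1/2)^k * e0 \<le> e0" using pk e0p by (simp add: mult_left_le_one_le)
        then have "L * ((1/2)^k * e0) \<le> L * e0" using L by (intro mult_left_mono) auto
        then have nde: "norm d \<le> L * e0" using nd2 by linarith
        have "norm (x k - u') \<le> 2 * L * e0" using Suc geo[of k] by linarith
        then have dxk': "dist (x k) u < R0"
          using du4 e0b R0 dist_triangle[of "x k" u u'] by (simp add: dist_norm)
        have "L * e0 \<le> R0 / 4" using e0b by simp
        then have "norm d < R0" using nde R0 by linarith
        have xS': "x (Suc k) = x k + d" unfolding xS d_def r_def ..
        have C1: "x (Suc k) \<in> C"
          unfolding xS' using loc[of "x k" d] Suc dxk' dT \<open>norm d < R0\<close> R0_def by simp
        have N1: "norm (x (Suc k) - u') \<le> 2 * L * e0 * (1 - (1/2)^Suc k)"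
        proof -
          have "norm (x (Suc k) - u') \<le> norm (x k - u') + norm d" unfolding xS'
            by (metis add.commute add_diff_eq norm_triangle_ineq)
          also have "\<dots> \<le> 2 * L * e0 * (1 - (1/2)^k) + L * ((1/2)^k * e0)" using Suc nd2 by simp
          also have "\<dots> = 2 * L * e0 * (1 - (1/2)^Suc k)" by (simp add: field_simps)
          finally show ?thesis .
        qed
        have "dist (x (Suc k)) u < R0"
        proof -
          have "norm (x (Suc k) - u') \<le> 2 * L * e0" using N1 geo[of "Suc k"] by linarith
          then show ?thesis using du4 e0b R0 dist_triangle[of "x (Suc k)" u u'] by (simp add: dist_norm)
        qed
        then have "norm (F (x (Suc k)) - F (x k) - A *v (x (Suc k) - x k)) \<le> norm (x (Suc k) - x k) * (\<kappa> / 4)"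
          using lin dxk' by (simp add: dist_commute)
        then have "norm (F (x (Suc k)) - y') \<le> norm d * (\<kappa> / 4)"
          unfolding xS' using Ad unfolding r_def by (simp add: algebra_simps)
        also have "\<dots> \<le> L * ((1/2)^k * e0) * (\<kappa> / 4)" using nd2 k by (simp add: mult_right_mono)
        also have "\<dots> = (1/2)^Suc k * e0" unfolding L_def using k by (simp add: field_simps)
        finally show ?case using C1 N1 by simp
      qed

      define dd where "dd j = x (Suc j) - x j" for j
      have ndd: "norm (dd j) \<le> L * e0 * (1/2)^j" for j
      proof -
        have "dd j = R (y' - F (x j))" unfolding dd_def xS by simp
        then have "norm (dd j) \<le> L * norm (y' - F (x j))" using Rp by simp
        also have "\<dots> \<le> L * ((1/2)^j * e0)" using inv[of j] L by (simp add: norm_minus_commute)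
        finally show ?thesis by (simp add: mult_ac)
      qed
      have "summable (\<lambda>j. L * e0 * (1/2::real)^j)"
        by (intro summable_mult summable_geometric) simp
      then have "summable (\<lambda>j. norm (dd j))"
        by (rule summable_comparison_test'[where N=0]) (simp add: ndd)
      then have sd: "summable dd" by (rule summable_norm_cancel)
      have xsum: "x k = u' + (\<Sum>j<k. dd j)" for k
        unfolding dd_def by (simp add: sum_lessThan_telescope x0)
      define xl where "xl = u' + suminf dd"
      have xl: "x \<longlonglongrightarrow> xl"
        unfolding xl_def xsum by (intro tendsto_add tendsto_const summable_LIMSEQ sd)
      have xlC: "xl \<in> C"
        using clC xl inv by (meson closed_sequentially)
      have "(\<lambda>k. norm (x k - u')) \<longlonglongrightarrow> norm (xl - u')"
        using xl by (intro tendsto_intros)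
      moreover have "\<forall>\<^sub>F k in sequentially. norm (x k - u') \<le> 2 * L * e0"
        using inv geo by (meson always_eventually order_trans)
      ultimately have nxl: "norm (xl - u') \<le> 2 * L * e0"
        by (rule tendsto_upperbound) simp
      have "continuous_on UNIV F"
        using deriv by (meson differentiable_at_imp_differentiable_on differentiable_def differentiable_imp_continuous_on)
      then have "isCont F xl" by (simp add: continuous_on_eq_continuous_at)
      then have Fl1: "(\<lambda>k. F (x k)) \<longlonglongrightarrow> F xl" using xl by (rule isCont_tendsto_compose)
      have "(\<lambda>k. (1/2::real)^k) \<longlonglongrightarrow> 0"
        by (rule LIMSEQ_power_zero) simp
      then have g0: "(\<lambda>k. (1/2::real)^k * e0) \<longlonglongrightarrow> 0"
        by (rule tendsto_mult_left_zero)
      have ev: "\<forall>\<^sub>F k in sequentially. norm (F (x k) - y') \<le> (1/2::real)^k * e0"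
        using inv by (intro always_eventually) blast
      have "(\<lambda>k. F (x k) - y') \<longlonglongrightarrow> 0"
        by (rule Lim_null_comparison[OF ev g0])
      then have "(\<lambda>k. F (x k) - y' + y') \<longlonglongrightarrow> 0 + y'" by (intro tendsto_intros)
      then have "(\<lambda>k. F (x k)) \<longlonglongrightarrow> y'" by simp
      with Fl1 have Fxl: "F xl = y'" by (rule LIMSEQ_unique)
      have inv_ne: "xl \<in> inv_map (plus_delta F C) y'" using xlC Fxl by (simp add: inv_map_pd)
      then have "infdist u' (inv_map (plus_delta F C) y') \<le> dist u' xl" by (rule infdist_le)
      also have "\<dots> \<le> (4 / \<kappa>) * dist y' (F u')"
        using nxl unfolding L_def e0_def by (simp add: dist_norm norm_minus_commute)
      finally have "infdist u' (inv_map (plus_delta F C) y') \<le> (4 / \<kappa>) * dist y' (F u')" .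
      moreover have "edist_set y' (plus_delta F C u') = ereal (dist y' (F u'))"
        unfolding edist_set_def plus_delta_eq using True by simp
      moreover have "edist_set u' (inv_map (plus_delta F C) y') = ereal (infdist u' (inv_map (plus_delta F C) y'))"
        unfolding edist_set_def using inv_ne by auto
      ultimately show ?thesis by simp
    qed
  qed
qed



lemma tendsto_mv:
  fixes M :: "'b \<Rightarrow> real^'n^'m"
  assumes "(M \<longlongrightarrow> A) F" "(y \<longlongrightarrow> l) F"
  shows "((\<lambda>k. M k *v y k) \<longlongrightarrow> A *v l) F"
  unfolding matrix_vector_mult_def
  by (intro tendsto_vec_lambda tendsto_sum tendsto_mult tendsto_vec_nth assms)

lemma tendsto_transpose:
  fixes M :: "'b \<Rightarrow> real^'n^'m"
  assumes "(M \<longlongrightarrow> A) F"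
  shows "((\<lambda>k. transpose (M k)) \<longlongrightarrow> transpose A) F"
  unfolding transpose_def
  by (intro tendsto_vec_lambda tendsto_vec_nth assms)

lemma cone_hull_sum:
  assumes "finite A" "\<And>i. i \<in> A \<Longrightarrow> f i \<in> convex_cone hull S"
  shows "sum f A \<in> convex_cone hull S"
  using assms by (induction A rule: finite_induct)
    (auto intro: convex_cone_hull_add convex_cone_hull_contains_0)

lemma basis_cone: "convex_cone hull (Basis \<union> uminus ` Basis) = (UNIV :: 'a::euclidean_space set)"
proof -
  have "x \<in> convex_cone hull (Basis \<union> uminus ` Basis)" for x :: 'a
  proof -
    have "(\<Sum>b\<in>Basis. (x \<bullet> b) *\<^sub>R b) \<in> convex_cone hull (Basis \<union> uminus ` Basis)"
    proof (rule cone_hull_sum)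
      fix b :: 'a assume b: "b \<in> Basis"
      show "(x \<bullet> b) *\<^sub>R b \<in> convex_cone hull (Basis \<union> uminus ` Basis)"
      proof (cases "x \<bullet> b \<ge> 0")
        case True
        then show ?thesis using b by (intro convex_cone_hull_mul hull_inc) auto
      next
        case False
        have "(- (x \<bullet> b)) *\<^sub>R (- b) \<in> convex_cone hull (Basis \<union> uminus ` Basis)"
          using False b by (intro convex_cone_hull_mul hull_inc) auto
        then show ?thesis by simp
      qed
    qed simp
    then show ?thesis by (simp add: euclidean_representation)
  qed
  then show ?thesis by auto
qed

lemma range_plus_cone:
  fixes M :: "real^'m^'n" and S :: "(real^'n) set"
  defines "P \<equiv> (\<lambda>x. M *v x) ` (Basis \<union> uminus ` Basis)"
  shows "convex_cone hull (S \<union> P) = {g + r | g r. g \<in> convex_cone hull S \<and> r \<in> range (\<lambda>x. M *v x)}"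
proof -
  have lin: "linear (\<lambda>x. M *v x)" by (simp add: matrix_vector_mul_linear)
  have "convex_cone hull P = range (\<lambda>x. M *v x)"
    unfolding P_def convex_cone_hull_linear_image[OF lin] basis_cone ..
  then show ?thesis unfolding convex_cone_hull_Un by auto
qed



declare transpose_matrix_vector[simp del]

lemma mvneg: "(M::real^'n^'m) *v (- x) = - (M *v x)"
proof -
  have "M *v (0 - x) = M *v 0 - M *v x" by (rule matrix_vector_mult_diff_distrib)
  then show ?thesis by simp
qed

lemma uniform:
  fixes C0 :: "(real^'n) set" and J :: "real^'n \<Rightarrow> real^'n^'m" and ub w :: "real^'n"
    and D :: "real^'m^'n"
  assumes fin: "finite I" and C: "C0 = {x. \<forall>i\<in>I. a i \<bullet> x \<le> b i}"
    and contJ: "continuous_on UNIV J" and ub: "ub \<in> C0" and nw: "norm w = 1"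
    and sd: "((\<lambda>(\<tau>, w'). (1 / \<tau>) *\<^sub>R (transpose (J (ub + \<tau> *\<^sub>R w')) - transpose (J ub)))
            \<longlongrightarrow> D) (at_right 0 \<times>\<^sub>F nhds w)"
    and hyp: "\<And>z. transpose (J ub) *v z \<in> normal_cone C0 ub \<Longrightarrow>
             D *v z \<in> {a + b | a b. a \<in> range (\<lambda>x. transpose (J ub) *v x) \<and> b \<in> normal_cone C0 ub}
             \<Longrightarrow> z = 0"
  shows "\<exists>c>0. \<exists>\<epsilon>0>0. \<exists>\<delta>0>0. \<forall>u\<in>C0. u \<in> Kset \<epsilon>0 \<delta>0 ub w \<longrightarrow> u \<noteq> ub \<longrightarrow>
          (\<forall>y g. norm y = 1 \<longrightarrow> g \<in> convex_cone hull (a ` act I a b u) \<longrightarrow>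
              norm (u - ub) / c \<le> norm (transpose (J u) *v y - g))"
proof (rule ccontr)
  assume nc: "\<not> ?thesis"
  define Q where "Q k u y g \<longleftrightarrow> u \<in> C0 \<and> u \<in> Kset (1 / (real k + 2)) (1 / (real k + 2)) ub w \<and> u \<noteq> ub
      \<and> norm y = 1 \<and> g \<in> convex_cone hull (a ` act I a b u)
      \<and> norm (transpose (J u) *v y - g) < norm (u - ub) / (real k + 1)" for k u y g
  have "\<exists>u y g. Q k u y g" for k :: nat
  proof -
    have pos: "real k + 1 > 0" "1 / (real k + 2) > 0" by simp_all
    have "\<not> (\<forall>u\<in>C0. u \<in> Kset (1 / (real k + 2)) (1 / (real k + 2)) ub w \<longrightarrow> u \<noteq> ub \<longrightarrow>
          (\<forall>y g. norm y = 1 \<longrightarrow> g \<in> convex_cone hull (a ` act I a b u) \<longrightarrow>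
              norm (u - ub) / (real k + 1) \<le> norm (transpose (J u) *v y - g)))"
      using nc pos by blast
    then show ?thesis unfolding Q_def by (auto simp: not_le)
  qed
  then obtain U Y G where UYG: "\<And>k. Q k (U k) (Y k) (G k)" by metis
  have "\<exists>\<gamma> z. \<gamma> \<ge> 0 \<and> norm (z - w) \<le> 1 / (real k + 2) \<and> U k = ub + \<gamma> *\<^sub>R z \<and> norm (\<gamma> *\<^sub>R z) \<le> 1 / (real k + 2)" for k
    using UYG[of k] unfolding Q_def Kset_def by blast
  then obtain \<Gamma> Z where GZ: "\<And>k. \<Gamma> k \<ge> 0" "\<And>k. norm (Z k - w) \<le> 1 / (real k + 2)"
     "\<And>k. U k = ub + \<Gamma> k *\<^sub>R Z k" "\<And>k. norm (\<Gamma> k *\<^sub>R Z k) \<le> 1 / (real k + 2)" by metis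
  have inv_le: "1 / (real k + 2) \<le> inverse (real (Suc k))" for k
    by (simp add: field_simps)
  have inv2: "1 / (real k + 2) \<le> 1/2" for k by (simp add: field_simps)
  have nZ: "norm (Z k) \<ge> 1/2" "norm (Z k) \<le> 2" for k
  proof -
    have "norm w \<le> norm (Z k) + norm (Z k - w)" by (metis norm_triangle_sub norm_minus_commute)
    then show "norm (Z k) \<ge> 1/2" using GZ(2)[of k] inv2[of k] nw by linarith
    have "norm (Z k) \<le> norm w + norm (Z k - w)" by (metis norm_triangle_sub)
    then show "norm (Z k) \<le> 2" using GZ(2)[of k] inv2[of k] nw by linarith
  qed
  have Gpos: "\<Gamma> k > 0" for k
  proof -
    have "U k \<noteq> ub" using UYG[of k] unfolding Q_def by blast
    then have "\<Gamma> k \<noteq> 0" using GZ(3)[of k] by auto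
    then show ?thesis using GZ(1)[of k] by simp
  qed
  have tk: "norm (U k - ub) = \<Gamma> k * norm (Z k)" for k using GZ(3)[of k] GZ(1)[of k] by simp
  have Gle: "\<Gamma> k \<le> 2 * inverse (real (Suc k))" for k
  proof -
    have "\<Gamma> k * norm (Z k) \<le> inverse (real (Suc k))" using GZ(4)[of k] GZ(1)[of k] inv_le[of k] by simp
    moreover have "\<Gamma> k * (1/2) \<le> \<Gamma> k * norm (Z k)" using nZ(1)[of k] GZ(1)[of k] by (rule mult_left_mono)
    ultimately show ?thesis by simp
  qed
  have tk2: "norm (U k - ub) \<le> 2 * \<Gamma> k" for k
    using tk[of k] nZ(2)[of k] GZ(1)[of k] by (simp add: mult_left_mono mult.commute)
  have lim0: "(\<lambda>k. inverse (real (Suc k))) \<longlonglongrightarrow> 0" by (rule LIMSEQ_inverse_real_of_nat)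
  have Zlim: "Z \<longlonglongrightarrow> w"
  proof -
    have "(\<lambda>k. Z k - w) \<longlonglongrightarrow> 0"
      by (rule Lim_null_comparison[OF always_eventually lim0]) (use GZ(2) inv_le in \<open>meson order_trans\<close>)
    then show ?thesis by (simp add: LIM_zero_iff)
  qed
  have Glim: "\<Gamma> \<longlonglongrightarrow> 0"
  proof -
    have l2: "(\<lambda>k. 2 * inverse (real (Suc k))) \<longlonglongrightarrow> 0" using tendsto_mult_right_zero[OF lim0, of 2] by simp
    have "\<forall>k. norm (\<Gamma> k) \<le> 2 * inverse (real (Suc k))" using Gle GZ(1) by simp
    from Lim_null_comparison[OF always_eventually[OF this] l2] show ?thesis .
  qed
  have Ulim: "U \<longlonglongrightarrow> ub"
  proof -
    have "(\<lambda>k. U k - ub) \<longlonglongrightarrow> 0"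
      by (rule Lim_null_comparison[OF always_eventually lim0]) (use GZ(3,4) inv_le in \<open>simp, meson order_trans\<close>)
    then show ?thesis by (simp add: LIM_zero_iff)
  qed

  have Ysph: "Y k \<in> sphere 0 1" for k using UYG[of k] unfolding Q_def by simp
  obtain l r where l: "l \<in> sphere 0 1" and r: "strict_mono r" and Yr: "(Y \<circ> r) \<longlonglongrightarrow> l"
    using compact_imp_seq_compact[OF compact_sphere, of 0 1] Ysph unfolding seq_compact_def by metis
  have nl: "norm l = 1" using l by simp
  have Ur: "(U \<circ> r) \<longlonglongrightarrow> ub" using LIMSEQ_subseq_LIMSEQ[OF Ulim r] .
  have Zr: "(Z \<circ> r) \<longlonglongrightarrow> w" using LIMSEQ_subseq_LIMSEQ[OF Zlim r] .
  have Gr: "(\<Gamma> \<circ> r) \<longlonglongrightarrow> 0" using LIMSEQ_subseq_LIMSEQ[OF Glim r] .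
  have "isCont J ub" using contJ by (simp add: continuous_on_eq_continuous_at)
  then have JUr: "(\<lambda>k. J (U (r k))) \<longlonglongrightarrow> J ub" using Ur unfolding comp_def by (rule isCont_tendsto_compose)
  have JY: "(\<lambda>k. transpose (J (U (r k))) *v Y (r k)) \<longlonglongrightarrow> transpose (J ub) *v l"
    using Yr unfolding comp_def by (intro tendsto_mv tendsto_transpose JUr)
  define E where "E k = transpose (J (U k)) *v Y k - G k" for k
  have nE: "norm (E k) \<le> 2 * \<Gamma> k * inverse (real (Suc k))" for k
  proof -
    have "norm (E k) < norm (U k - ub) / (real k + 1)" using UYG[of k] unfolding Q_def E_def by blast
    also have "\<dots> \<le> 2 * \<Gamma> k / (real k + 1)" using tk2[of k] by (simp add: divide_right_mono)
    finally show ?thesis by (simp add: field_simps)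
  qed
  have Elim: "E \<longlonglongrightarrow> 0"
  proof -
    have l2: "(\<lambda>k. 2 * \<Gamma> k * inverse (real (Suc k))) \<longlonglongrightarrow> 0"
      using tendsto_mult[OF tendsto_mult_right_zero[OF Glim, of 2] lim0] by simp
    from Lim_null_comparison[OF always_eventually l2] nE show ?thesis by blast
  qed
  have EGlim: "(\<lambda>k. (1 / \<Gamma> k) *\<^sub>R E k) \<longlonglongrightarrow> 0"
  proof -
    have "norm ((1 / \<Gamma> k) *\<^sub>R E k) \<le> 2 * inverse (real (Suc k))" for k
    proof -
      have "norm ((1 / \<Gamma> k) *\<^sub>R E k) = norm (E k) / \<Gamma> k" using Gpos[of k] by simp
      also have "\<dots> \<le> (2 * \<Gamma> k * inverse (real (Suc k))) / \<Gamma> k"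
        by (rule divide_right_mono[OF nE[of k]]) (use Gpos[of k] in simp)
      also have "\<dots> = 2 * inverse (real (Suc k))" using Gpos[of k] by simp
      finally show ?thesis .
    qed
    then have "\<forall>k. norm ((1 / \<Gamma> k) *\<^sub>R E k) \<le> 2 * inverse (real (Suc k))" by blast
    moreover have l2: "(\<lambda>k. 2 * inverse (real (Suc k))) \<longlonglongrightarrow> 0" using tendsto_mult_right_zero[OF lim0, of 2] by simp
    ultimately show ?thesis by (rule Lim_null_comparison[OF always_eventually])
  qed

  define Gc where "Gc = convex_cone hull (a ` act I a b ub)"
  have finact: "finite (act I a b ub)" using fin unfolding act_def by simp
  have clGc: "closed Gc" unfolding Gc_def using finact by (intro closed_convex_cone_hull) simp
  obtain \<rho> where rho: "\<rho> > 0" "\<And>x. x \<in> C0 \<Longrightarrow> dist x ub < \<rho> \<Longrightarrow> act I a b x \<subseteq> act I a b ub"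
    using poly_local[OF fin C ub] by blast
  have "\<forall>\<^sub>F k in sequentially. dist ((U \<circ> r) k) ub < \<rho>" using Ur rho(1) by (rule tendstoD)
  then have evG: "\<forall>\<^sub>F k in sequentially. G (r k) \<in> Gc"
  proof (rule eventually_mono)
    fix k assume "dist ((U \<circ> r) k) ub < \<rho>"
    moreover have "U (r k) \<in> C0" using UYG[of "r k"] unfolding Q_def by blast
    ultimately have "act I a b (U (r k)) \<subseteq> act I a b ub" using rho(2) by simp
    moreover have "G (r k) \<in> convex_cone hull (a ` act I a b (U (r k)))" using UYG[of "r k"] unfolding Q_def by blast
    ultimately show "G (r k) \<in> Gc" unfolding Gc_def by (meson hull_mono image_mono subsetD)
  qed
  have "(\<lambda>k. transpose (J (U (r k))) *v Y (r k) - E (r k)) \<longlonglongrightarrow> transpose (J ub) *v l - 0"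
    using JY LIMSEQ_subseq_LIMSEQ[OF Elim r] unfolding comp_def by (intro tendsto_diff)
  then have GrL: "(\<lambda>k. G (r k)) \<longlonglongrightarrow> transpose (J ub) *v l" unfolding E_def by simp
  have JlGc: "transpose (J ub) *v l \<in> Gc"
    using Lim_in_closed_set[OF clGc evG _ GrL] by simp
  have GcN: "Gc \<subseteq> normal_cone C0 ub" unfolding Gc_def by (rule act_normal[OF C ub])
  have JlN: "transpose (J ub) *v l \<in> normal_cone C0 ub" using JlGc GcN by blast
  have evpos: "\<forall>\<^sub>F k in sequentially. (\<Gamma> \<circ> r) k > 0" using Gpos by simp
  have fl1: "filterlim (\<Gamma> \<circ> r) (at_right 0) sequentially"
    by (rule tendsto_imp_filterlim_at_right[OF Gr evpos])
  have fl: "filterlim (\<lambda>k. ((\<Gamma> \<circ> r) k, (Z \<circ> r) k)) (at_right 0 \<times>\<^sub>F nhds w) sequentially"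
    using fl1 Zr by (rule filterlim_Pair)
  have PhiL: "(\<lambda>k. (1 / \<Gamma> (r k)) *\<^sub>R (transpose (J (U (r k))) - transpose (J ub))) \<longlonglongrightarrow> D"
    using filterlim_compose[OF sd fl] unfolding GZ(3) by (simp add: comp_def)
  have PY: "(\<lambda>k. ((1 / \<Gamma> (r k)) *\<^sub>R (transpose (J (U (r k))) - transpose (J ub))) *v Y (r k)) \<longlonglongrightarrow> D *v l"
    using PhiL Yr unfolding comp_def by (rule tendsto_mv)
  define q where "q k = (1 / \<Gamma> k) *\<^sub>R G k + transpose (J ub) *v (- (1 / \<Gamma> k) *\<^sub>R Y k)" for k
  have qeq: "((1 / \<Gamma> k) *\<^sub>R (transpose (J (U k)) - transpose (J ub))) *v Y k = q k + (1 / \<Gamma> k) *\<^sub>R E k" for k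
    unfolding q_def E_def
    by (simp add: scaleR_matrix_vector_assoc[symmetric] matrix_vector_mult_diff_rdistrib matrix_vector_mult_scaleR mvneg algebra_simps)
  have "(\<lambda>k. q (r k) + (1 / \<Gamma> (r k)) *\<^sub>R E (r k) - (1 / \<Gamma> (r k)) *\<^sub>R E (r k)) \<longlonglongrightarrow> D *v l - 0"
    using PY LIMSEQ_subseq_LIMSEQ[OF EGlim r] unfolding qeq comp_def by (intro tendsto_diff)
  then have qL: "(\<lambda>k. q (r k)) \<longlonglongrightarrow> D *v l" by simp
  define P where "P = (\<lambda>x. transpose (J ub) *v x) ` (Basis \<union> uminus ` Basis)"
  define H where "H = convex_cone hull (a ` act I a b ub \<union> P)"
  have Heq: "H = {g + r | g r. g \<in> Gc \<and> r \<in> range (\<lambda>x. transpose (J ub) *v x)}"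
    unfolding H_def P_def Gc_def by (rule range_plus_cone)
  have clH: "closed H" unfolding H_def P_def using finact by (intro closed_convex_cone_hull) simp
  have evH: "\<forall>\<^sub>F k in sequentially. q (r k) \<in> H"
    using evG
  proof (rule eventually_mono)
    fix k assume "G (r k) \<in> Gc"
    then have "(1 / \<Gamma> (r k)) *\<^sub>R G (r k) \<in> Gc" unfolding Gc_def using Gpos[of "r k"]
      by (intro convex_cone_hull_mul) auto
    then show "q (r k) \<in> H" unfolding Heq q_def by blast
  qed
  have "D *v l \<in> H" using Lim_in_closed_set[OF clH evH _ qL] by simp
  then obtain g0 r0 where g0: "g0 \<in> Gc" "r0 \<in> range (\<lambda>x. transpose (J ub) *v x)" "D *v l = g0 + r0"
    unfolding Heq by blast
  have "D *v l \<in> {a + b | a b. a \<in> range (\<lambda>x. transpose (J ub) *v x) \<and> b \<in> normal_cone C0 ub}"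
  proof -
    have "g0 \<in> normal_cone C0 ub" using g0(1) GcN by blast
    moreover have "D *v l = r0 + g0" using g0(3) by (simp add: add.commute)
    ultimately show ?thesis using g0(2) by blast
  qed
  then have "l = 0" using hyp[OF JlN] by blast
  then show False using nl by simp
qed



declare transpose_matrix_vector[simp del]

theorem corollary2:
  fixes C0 :: "(real ^ 'n) set"
    and F :: "real ^ 'n \<Rightarrow> real ^ 'm"
    and J :: "real ^ 'n \<Rightarrow> real ^ 'n ^ 'm"
    and ub w :: "real ^ 'n"
    and D :: "real ^ 'm ^ 'n"
  assumes "polyhedron C0" and "C0 \<noteq> {}"
    and "\<And>u. (F has_derivative (\<lambda>h. J u *v h)) (at u)"
    and "continuous_on UNIV J"
    and "ub \<in> C0"
    and "norm w = 1" and "w \<in> tangent_cone C0 ub"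
    and "((\<lambda>(\<tau>, w'). (1 / \<tau>) *\<^sub>R (transpose (J (ub + \<tau> *\<^sub>R w')) - transpose (J ub)))
            \<longlongrightarrow> D) (at_right 0 \<times>\<^sub>F nhds w)"
    and "\<And>z. transpose (J ub) *v z \<in> normal_cone C0 ub \<Longrightarrow>
             D *v z \<in> {a + b | a b. a \<in> range (\<lambda>x. transpose (J ub) *v x) \<and> b \<in> normal_cone C0 ub}
             \<Longrightarrow> z = 0"
  shows "metrically_2_regular (plus_delta F C0) ub (F ub) w"
proof -
  note deriv = assms(3) and contJ = assms(4) and ubC = assms(5) and nw = assms(6)
  obtain I :: "(real^'n) set set" and a b where fin: "finite I" and C: "C0 = {x. \<forall>i\<in>I. a i \<bullet> x \<le> b i}"
    using poly_rep[OF assms(1)] by blast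
  have clC: "closed C0" using assms(1) by (rule polyhedron_imp_closed)
  have ex: "\<exists>c>0. \<exists>\<epsilon>0>0. \<exists>\<delta>0>0. \<forall>u\<in>C0. u \<in> Kset \<epsilon>0 \<delta>0 ub w \<longrightarrow> u \<noteq> ub \<longrightarrow>
          (\<forall>y g. norm y = 1 \<longrightarrow> g \<in> convex_cone hull (a ` act I a b u) \<longrightarrow>
              norm (u - ub) / c \<le> norm (transpose (J u) *v y - g))"
    apply (rule uniform[OF fin C contJ ubC nw assms(8)])
    apply (rule assms(9))
     apply assumption+
    done
  then obtain c \<epsilon>0 \<delta>0 where c: "c > 0" and e0: "\<epsilon>0 > 0" and d0: "\<delta>0 > 0"
    and U0: "\<forall>u\<in>C0. u \<in> Kset \<epsilon>0 \<delta>0 ub w \<longrightarrow> u \<noteq> ub \<longrightarrow>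
          (\<forall>y g. norm y = 1 \<longrightarrow> g \<in> convex_cone hull (a ` act I a b u) \<longrightarrow>
              norm (u - ub) / c \<le> norm (transpose (J u) *v y - g))"
    by blast
  have U: "\<forall>y g. norm y = 1 \<longrightarrow> g \<in> convex_cone hull (a ` act I a b u) \<longrightarrow>
              norm (u - ub) / c \<le> norm (transpose (J u) *v y - g)"
    if "u \<in> C0" "u \<in> Kset \<epsilon>0 \<delta>0 ub w" "u \<noteq> ub" for u
    using U0 that by blast
  define Kc where "Kc = real (CARD('m)) * real (CARD('n))"
  have Kc: "Kc > 0" unfolding Kc_def by simp
  have "isCont J ub" using contJ by (simp add: continuous_on_eq_continuous_at)
  then obtain \<delta> where dl: "\<delta> > 0" "\<And>x. dist x ub < \<delta> \<Longrightarrow> dist (J x) (J ub) < 1"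
    unfolding continuous_at_eps_delta by (meson zero_less_one)
  define B where "B = Kc * (norm (J ub) + 1)"
  have B: "B \<ge> 0" unfolding B_def using Kc by simp
  have lip: "norm (F x - F ub) \<le> B * norm (x - ub)" if "x \<in> ball ub \<delta>" for x
  proof (rule differentiable_bound[where S="ball ub \<delta>" and f'="\<lambda>x h. J x *v h"])
    show "convex (ball ub \<delta>)" by simp
    show "(F has_derivative (\<lambda>h. J x *v h)) (at x within ball ub \<delta>)" for x
      using deriv by (rule has_derivative_at_withinI)
    show "x \<in> ball ub \<delta>" by (rule that)
    show "ub \<in> ball ub \<delta>" using dl by simp
    show "onorm (\<lambda>h. J x *v h) \<le> B" if "x \<in> ball ub \<delta>" for x
    proof -
      have "onorm ((*v) (J x)) \<le> Kc * norm (J x)" using onorm_mat_le unfolding Kc_def by blast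
      moreover have "dist x ub < \<delta>" using that by (simp add: dist_commute)
      then have "norm (J x - J ub) < 1" using dl(2) by (simp add: dist_norm)
      then have "norm (J x) \<le> norm (J ub) + 1" using norm_triangle_sub[of "J x" "J ub"] by linarith
      then have "Kc * norm (J x) \<le> B" unfolding B_def using Kc by (intro mult_left_mono) auto
      ultimately show ?thesis by simp
    qed
  qed
  have gdB: "norm \<eta> \<le> B" if eta: "\<eta> \<in> graph_deriv (plus_delta F C0) ub (F ub) w" for \<eta>
  proof -
    obtain t vs where tv: "\<And>k. t k > 0" "t \<longlonglongrightarrow> 0" "vs \<longlonglongrightarrow> (w, \<eta>)"
      "\<And>k. (ub, F ub) + t k *\<^sub>R vs k \<in> gph (plus_delta F C0)"
      using eta unfolding graph_deriv_def tangent_cone_def by blast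
    have f1: "(\<lambda>k. fst (vs k)) \<longlonglongrightarrow> w" using tendsto_fst[OF tv(3)] by simp
    have f2: "(\<lambda>k. snd (vs k)) \<longlonglongrightarrow> \<eta>" using tendsto_snd[OF tv(3)] by simp
    have eq: "F (ub + t k *\<^sub>R fst (vs k)) = F ub + t k *\<^sub>R snd (vs k)" for k
      using tv(4)[of k] unfolding gph_def plus_delta_eq by (cases "vs k") (auto split: if_splits)
    have "(\<lambda>k. t k * norm (fst (vs k))) \<longlonglongrightarrow> 0 * norm w"
      using tv(2) f1 by (intro tendsto_mult tendsto_norm)
    then have "\<forall>\<^sub>F k in sequentially. dist (t k * norm (fst (vs k))) 0 < \<delta>"
      using dl(1) by (intro tendstoD) simp_all
    then have ev: "\<forall>\<^sub>F k in sequentially. norm (snd (vs k)) - B * norm (fst (vs k)) \<le> 0"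
    proof (rule eventually_mono)
      fix k assume "dist (t k * norm (fst (vs k))) 0 < \<delta>"
      then have "ub + t k *\<^sub>R fst (vs k) \<in> ball ub \<delta>" using tv(1)[of k] by (simp add: dist_norm)
      then have "norm (F (ub + t k *\<^sub>R fst (vs k)) - F ub) \<le> B * norm ((ub + t k *\<^sub>R fst (vs k)) - ub)"
        by (rule lip)
      then have "norm (F (ub + t k *\<^sub>R fst (vs k)) - F ub) \<le> B * norm (t k *\<^sub>R fst (vs k))"
        by simp
      then have "t k * norm (snd (vs k)) \<le> t k * (B * norm (fst (vs k)))"
        unfolding eq using tv(1)[of k] by (simp add: mult_ac)
      then show "norm (snd (vs k)) - B * norm (fst (vs k)) \<le> 0" using tv(1)[of k] by simp
    qed
    have "(\<lambda>k. norm (snd (vs k)) - B * norm (fst (vs k))) \<longlonglongrightarrow> norm \<eta> - B * norm w"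
      using f1 f2 by (intro tendsto_intros)
    then have "norm \<eta> - B * norm w \<le> 0" using ev by (rule tendsto_upperbound) simp
    then show ?thesis using nw by simp
  qed
  have SUPB: "(SUP \<eta>\<in>graph_deriv (plus_delta F C0) ub (F ub) w. ereal (norm \<eta> / norm w)) < ereal (B + 1)"
  proof -
    have "(SUP \<eta>\<in>graph_deriv (plus_delta F C0) ub (F ub) w. ereal (norm \<eta> / norm w)) \<le> ereal B"
      using gdB nw by (intro SUP_least) simp
    also have "\<dots> < ereal (B + 1)" by simp
    finally show ?thesis .
  qed
  have main: "\<forall>u\<in>Kset \<epsilon>0 \<delta>0 ub w - {ub}. \<forall>y\<in>plus_delta F C0 u \<inter> cball (F ub) ((B + 1) * norm (u - ub)).
      metrically_regular_around (plus_delta F C0) u y (4 * c / norm (u - ub))"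
  proof (intro ballI)
    fix u y assume u: "u \<in> Kset \<epsilon>0 \<delta>0 ub w - {ub}"
      and y: "y \<in> plus_delta F C0 u \<inter> cball (F ub) ((B + 1) * norm (u - ub))"
    have uC: "u \<in> C0" and yF: "y = F u" using y unfolding plus_delta_eq by (auto split: if_splits)
    have une: "u \<noteq> ub" and uK: "u \<in> Kset \<epsilon>0 \<delta>0 ub w" using u by auto
    define \<kappa> where "\<kappa> = norm (u - ub) / c"
    have kp: "\<kappa> > 0" unfolding \<kappa>_def using une c by simp
    define T where "T = {v. \<forall>i\<in>act I a b u. a i \<bullet> v \<le> 0}"
    have finu: "finite (a ` act I a b u)" using fin unfolding act_def by simp
    have op: "\<exists>v\<in>T. norm v \<le> 1 \<and> J u *v v = r" if "norm r < \<kappa>" for r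
    proof -
      have "\<exists>v. (\<forall>s\<in>a ` act I a b u. s \<bullet> v \<le> 0) \<and> norm v \<le> 1 \<and> J u *v v = r"
        using lin_open[OF finu kp _ that] U[OF uC uK une] unfolding \<kappa>_def by blast
      then show ?thesis unfolding T_def by auto
    qed
    obtain \<rho> where rho: "\<rho> > 0" "\<And>x. x \<in> C0 \<Longrightarrow> dist x u < \<rho> \<Longrightarrow>
        act I a b x \<subseteq> act I a b u \<and> (\<forall>v. (\<forall>i\<in>act I a b u. a i \<bullet> v \<le> 0) \<longrightarrow> norm v < \<rho> \<longrightarrow> x + v \<in> C0)"
      using poly_local[OF fin C uC] by blast
    have loc: "x + v \<in> C0" if "x \<in> C0" "dist x u < \<rho>" "v \<in> T" "norm v < \<rho>" for x v
      using rho(2)[OF that(1,2)] that(3,4) unfolding T_def by blast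
    have T0: "0 \<in> T" unfolding T_def by simp
    have Tc: "c' *\<^sub>R v \<in> T" if "c' \<ge> 0" "v \<in> T" for c' v
      using that unfolding T_def by (simp add: mult_nonneg_nonpos)
    have "metrically_regular_around (plus_delta F C0) u (F u) (4 / \<kappa>)"
      by (rule mr_from_open[OF clC deriv contJ uC kp rho(1) T0 Tc loc op])
    moreover have "4 / \<kappa> = 4 * c / norm (u - ub)" unfolding \<kappa>_def by simp
    ultimately show "metrically_regular_around (plus_delta F C0) u y (4 * c / norm (u - ub))"
      using yF by simp
  qed
  have "w \<noteq> 0" using nw by auto
  moreover have "4 * c > 0" "B + 1 > 0" using c B by simp_all
  ultimately show ?thesis
    unfolding metrically_2_regular_def using e0 d0 SUPB main by blast
qed


end
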